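(* Let $k\ge 1$ be an integer, let $\lambda_1,\lambda_2,\dots,\lambda_k$ be pairwise distinct complex numbers with $|\lambda_\ell|<1$ for all $\ell$, and let $s_1,s_2,\dots,s_k$ be integers. Put $S=|s_1+s_2+\cdots+s_k|$. Then the limit $$A=\lim_{n\to\infty}\frac{1}{n}\sum_{i_1,i_2,\dots,i_k=1}^{n}\lambda_1^{|i_1-i_2-s_1|}\,\lambda_2^{|i_2-i_3-s_2|}\cdots\lambda_{k-1}^{|i_{k-1}-i_k-s_{k-1}|}\,\lambda_k^{|i_k-i_1-s_k|}$$ exists, and $$A=\sum_{j=1}^{k}\lambda_j^{S+k-1}\prod_{\substack{\ell=1\\ \ell\neq j}}^{k}\frac{1-\lambda_\ell^{2}}{(\lambda_j-\lambda_\ell)(1-\lambda_j\lambda_\ell)}.$$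
   Context: The sum runs over all $k$-tuples $(i_1,\dots,i_k)$ of integers with $1\le i_p\le n$ for each $p$. The convention $\lambda^0=1$ is used for all $\lambda$ (including $\lambda=0$), and an empty product equals $1$. In the intended application the $\lambda_\ell$ are roots of the characteristic polynomial $\lambda^k=\alpha_1\lambda^{k-1}+\cdots+\alpha_k$ of a stationary autoregressive model, but the statement is purely about the numbers $\lambda_\ell$. *)

theory Defs
  imports "HOL-Analysis.Analysis"
begin

end

theory Submission
  imports Defs
begin


definition gg :: "complex \<Rightarrow> int \<Rightarrow> complex" where
  "gg a t = a ^ nat \<bar>t\<bar>"

definition al :: "complex \<Rightarrow> complex \<Rightarrow> complex" where
  "al x y = x * (1 - y^2) / ((x - y) * (1 - x * y))"

lemma geo_has_sum:
  fixes q :: "'a::{real_normed_field,banach}" assumes "norm q < 1"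
  shows "((\<lambda>w::nat. q ^ w) has_sum (1 / (1 - q))) UNIV"
proof (rule norm_summable_imp_has_sum)
  show "summable (\<lambda>n. norm (q ^ n))"
    unfolding norm_power using assms by (intro summable_geometric) simp
  show "(\<lambda>n. q ^ n) sums (1 / (1 - q))"
    using geometric_sums[of q] assms by simp
qed

lemma has_sum_sum_fin:
  fixes f :: "'i \<Rightarrow> 'a \<Rightarrow> complex"
  assumes "finite J" "\<And>j. j \<in> J \<Longrightarrow> (f j has_sum s j) A"
  shows "((\<lambda>x. \<Sum>j\<in>J. f j x) has_sum (\<Sum>j\<in>J. s j)) A"
  using assms by (induction J rule: finite_induct) (auto intro: has_sum_add)

lemma conv_alg: "(a::complex) \<noteq> b \<Longrightarrow> 1 - a*b \<noteq> 0 \<Longrightarrow>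
  a*b*B / (1 - a*b) + (a*A - b*B) / (a - b) + a*b*A / (1 - a*b)
     = a * (1 - b^2) / ((a - b) * (1 - a * b)) * A + b * (1 - a^2) / ((b - a) * (1 - b * a)) * B"
proof -
  assume h: "a \<noteq> b" "1 - a*b \<noteq> 0"
  define c where "c = 1 - a*b"
  define e where "e = a - b"
  have ce: "c \<noteq> 0" "e \<noteq> 0" "1 - b*a = c" "b - a = -e" "1 - a*b = c" "a - b = e"
    using h by (auto simp: c_def e_def mult.commute)
  have "a*b*B / c + (a*A - b*B) / e + a*b*A / c = a * (1 - b^2) / (e * c) * A + b * (1 - a^2) / ((-e) * c) * B"
    using ce(1,2) apply (simp add: field_simps) unfolding c_def e_def by (simp add: algebra_simps power2_eq_square)
  then show ?thesis by (simp only: ce)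
qed

lemma conv_pos:
  fixes a b :: complex and m :: int
  assumes ab: "a \<noteq> b" and na: "norm a < 1" and nb: "norm b < 1" and m: "m \<ge> 0"
  shows "((\<lambda>z. gg a z * gg b (m - z)) has_sum (al a b * gg a m + al b a * gg b m)) UNIV"
proof -
  define M where "M = nat m"
  have mM: "m = int M" using m M_def by simp
  have nab: "norm (a*b) < 1"
    using mult_strict_mono'[OF na nb] by (simp add: norm_mult)
  have ab1: "1 - a*b \<noteq> 0" using nab by auto
  have amb: "a - b \<noteq> 0" using ab by simp
  define f where "f = (\<lambda>z. gg a z * gg b (m - z))"
  have P1: "(f has_sum (a*b*b^M / (1 - a*b))) {..<0}"
  proof -
    have im: "{..<0::int} = (\<lambda>w::nat. - int w - 1) ` UNIV"
      by (auto simp: image_iff intro!: exI[of _ "nat (- x - 1)" for x])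
    have inj: "inj (\<lambda>w::nat. - int w - 1)" by (auto simp: inj_def)
    have "((\<lambda>w. (a*b*b^M) * (a*b)^w) has_sum ((a*b*b^M) * (1/(1 - a*b)))) UNIV"
      by (intro has_sum_cmult_right geo_has_sum nab)
    moreover have "(f \<circ> (\<lambda>w::nat. - int w - 1)) = (\<lambda>w. (a*b*b^M) * (a*b)^w)"
    proof
      fix w :: nat
      have "nat \<bar>- int w - 1\<bar> = Suc w" by simp
      moreover have "nat \<bar>m - (- int w - 1)\<bar> = M + Suc w" using mM by simp
      ultimately show "(f \<circ> (\<lambda>w::nat. - int w - 1)) w = (a*b*b^M) * (a*b)^w"
        by (simp add: f_def gg_def power_add power_mult_distrib)
    qed
    ultimately show ?thesis using has_sum_reindex[OF inj, of f] im by simp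
  qed
  have P3: "(f has_sum (a*b*a^M / (1 - a*b))) {m<..}"
  proof -
    have im: "{m<..} = (\<lambda>w::nat. m + 1 + int w) ` UNIV"
      by (auto simp: image_iff intro!: exI[of _ "nat (x - m - 1)" for x])
    have inj: "inj (\<lambda>w::nat. m + 1 + int w)" by (auto simp: inj_def)
    have "((\<lambda>w. (a*b*a^M) * (a*b)^w) has_sum ((a*b*a^M) * (1/(1 - a*b)))) UNIV"
      by (intro has_sum_cmult_right geo_has_sum nab)
    moreover have "(f \<circ> (\<lambda>w::nat. m + 1 + int w)) = (\<lambda>w. (a*b*a^M) * (a*b)^w)"
    proof
      fix w :: nat
      have "nat \<bar>m + 1 + int w\<bar> = M + Suc w" using mM by simp
      moreover have "nat \<bar>m - (m + 1 + int w)\<bar> = Suc w" by simp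
      ultimately show "(f \<circ> (\<lambda>w::nat. m + 1 + int w)) w = (a*b*a^M) * (a*b)^w"
        by (simp add: f_def gg_def power_add power_mult_distrib)
    qed
    ultimately show ?thesis using has_sum_reindex[OF inj, of f] im by simp
  qed
  have P2: "(f has_sum ((a^Suc M - b^Suc M) / (a - b))) {0..m}"
  proof -
    have "sum f {0..m} = (\<Sum>p<Suc M. a^p * b^(M - p))"
    proof -
      have "{0..m} = int ` {..<Suc M}" unfolding mM lessThan_Suc_atMost atLeast0AtMost[symmetric]
        by (simp add: image_int_atLeastAtMost)
      then have "sum f {0..m} = sum (f \<circ> int) {..<Suc M}"
        by (simp add: sum.reindex)
      also have "\<dots> = (\<Sum>p<Suc M. a^p * b^(M - p))"
        by (intro sum.cong) (auto simp: f_def gg_def mM nat_diff_distrib)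
      finally show ?thesis .
    qed
    also have "\<dots> = (a^Suc M - b^Suc M) / (a - b)"
      using diff_power_eq_sum[of a M b] amb by simp
    finally show ?thesis using has_sum_finite[of "{0..m}" f] by simp
  qed
  have "(f has_sum (a*b*b^M / (1 - a*b) + (a^Suc M - b^Suc M) / (a - b) + a*b*a^M / (1 - a*b)))
        ({..<0} \<union> {0..m} \<union> {m<..})"
    by (intro has_sum_Un_disjoint P1 P2 P3) (use m in auto)
  moreover have "{..<0} \<union> {0..m} \<union> {m<..} = UNIV" by auto
  moreover have "a*b*b^M / (1 - a*b) + (a^Suc M - b^Suc M) / (a - b) + a*b*a^M / (1 - a*b)
     = al a b * gg a m + al b a * gg b m"
    using conv_alg[of a b "b^M" "a^M"] ab ab1 by (simp add: al_def gg_def mM)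
  ultimately show ?thesis by (simp add: f_def)
qed

lemma gg_neg[simp]: "gg a (- m) = gg a m" by (simp add: gg_def)

lemma conv_all:
  fixes a b :: complex and m :: int
  assumes ab: "a \<noteq> b" and na: "norm a < 1" and nb: "norm b < 1"
  shows "((\<lambda>z. gg a z * gg b (m - z)) has_sum (al a b * gg a m + al b a * gg b m)) UNIV"
proof (cases "m \<ge> 0")
  case True then show ?thesis using conv_pos[OF assms] by blast
next
  case False
  have h: "((\<lambda>z. gg a z * gg b (- m - z)) has_sum (al a b * gg a (-m) + al b a * gg b (-m))) UNIV"
    using conv_pos[OF assms, of "-m"] False by simp
  have "((\<lambda>z. gg a z * gg b (m - z)) has_sum (al a b * gg a (-m) + al b a * gg b (-m))) UNIV
        = ((\<lambda>z. gg a z * gg b (- m - z)) has_sum (al a b * gg a (-m) + al b a * gg b (-m))) UNIV"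
  proof (rule has_sum_reindex_bij_witness[where i = uminus and j = uminus])
    fix z :: int
    show "gg a (- z) * gg b (- m - - z) = gg a z * gg b (m - z)"
      using gg_neg[of a z] gg_neg[of b "m - z"] by simp
  qed auto
  then show ?thesis using h by simp
qed

lemma conv_shift:
  fixes a b :: complex and u v :: int
  assumes ab: "a \<noteq> b" and na: "norm a < 1" and nb: "norm b < 1"
  shows "((\<lambda>z. gg a (u - z) * gg b (z - v)) has_sum (al a b * gg a (u - v) + al b a * gg b (u - v))) UNIV"
proof -
  have "((\<lambda>z. gg a z * gg b ((u - v) - z)) has_sum (al a b * gg a (u - v) + al b a * gg b (u - v))) UNIV
      = ((\<lambda>z. gg a (u - z) * gg b (z - v)) has_sum (al a b * gg a (u - v) + al b a * gg b (u - v))) UNIV"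
  proof (rule has_sum_reindex_bij_witness[where i = "\<lambda>z. u - z" and j = "\<lambda>z. u - z"])
    fix z :: int
    show "gg a (u - (u - z)) * gg b (u - z - v) = gg a z * gg b (u - v - z)"
      by (simp add: algebra_simps)
  qed auto
  then show ?thesis using conv_all[OF assms] by simp
qed

lemma geo_tail_right:
  fixes \<rho> :: real and c d :: int
  assumes "0 \<le> \<rho>" "\<rho> < 1" "c \<le> d"
  shows "((\<lambda>z. \<rho> ^ nat \<bar>c - z\<bar>) has_sum (\<rho> ^ nat (d - c) / (1 - \<rho>))) {d..}"
proof -
  have im: "{d..} = (\<lambda>w::nat. d + int w) ` UNIV"
    by (auto simp: image_iff intro!: exI[of _ "nat (x - d)" for x])
  have inj: "inj (\<lambda>w::nat. d + int w)" by (auto simp: inj_def)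
  have "((\<lambda>w. \<rho> ^ nat (d - c) * \<rho> ^ w) has_sum (\<rho> ^ nat (d - c) * (1 / (1 - \<rho>)))) UNIV"
    by (intro has_sum_cmult_right geo_has_sum) (use assms in auto)
  moreover have "((\<lambda>z. \<rho> ^ nat \<bar>c - z\<bar>) \<circ> (\<lambda>w::nat. d + int w)) = (\<lambda>w. \<rho> ^ nat (d - c) * \<rho> ^ w)"
  proof
    fix w :: nat
    have "nat \<bar>c - (d + int w)\<bar> = nat (d - c) + w" using assms by simp
    then show "((\<lambda>z. \<rho> ^ nat \<bar>c - z\<bar>) \<circ> (\<lambda>w::nat. d + int w)) w = \<rho> ^ nat (d - c) * \<rho> ^ w"
      by (simp add: power_add)
  qed
  ultimately show ?thesis using has_sum_reindex[OF inj, of "(\<lambda>z. \<rho> ^ nat \<bar>c - z\<bar>)"] im by simp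
qed

lemma geo_tail_left:
  fixes \<rho> :: real and c d :: int
  assumes "0 \<le> \<rho>" "\<rho> < 1" "d \<le> c"
  shows "((\<lambda>z. \<rho> ^ nat \<bar>c - z\<bar>) has_sum (\<rho> ^ nat (c - d) / (1 - \<rho>))) {..d}"
proof -
  have h: "((\<lambda>z. \<rho> ^ nat \<bar>(-c) - z\<bar>) has_sum (\<rho> ^ nat (-d - (-c)) / (1 - \<rho>))) {-d..}"
    by (rule geo_tail_right) (use assms in auto)
  have "((\<lambda>z. \<rho> ^ nat \<bar>(-c) - z\<bar>) has_sum (\<rho> ^ nat (c - d) / (1 - \<rho>))) {-d..}
     = ((\<lambda>z. \<rho> ^ nat \<bar>c - z\<bar>) has_sum (\<rho> ^ nat (c - d) / (1 - \<rho>))) {..d}"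
  proof (rule has_sum_reindex_bij_witness[where i = uminus and j = uminus])
    fix z :: int
    have "\<bar>- c - z\<bar> = \<bar>c - - z\<bar>" by arith
    then show "\<rho> ^ nat \<bar>c - - z\<bar> = \<rho> ^ nat \<bar>- c - z\<bar>" by simp
  qed auto
  then show ?thesis using h by simp
qed

lemma geo_whole:
  fixes \<rho> :: real and c :: int
  assumes "0 \<le> \<rho>" "\<rho> < 1"
  shows "((\<lambda>z. \<rho> ^ nat \<bar>c - z\<bar>) has_sum (2 / (1 - \<rho>) - 1)) UNIV"
proof -
  have "((\<lambda>z. \<rho> ^ nat \<bar>c - z\<bar>) has_sum (\<rho> ^ nat (c - c) / (1 - \<rho>) + \<rho> ^ nat (c + 1 - c) / (1 - \<rho>))) ({..c} \<union> {c+1..})"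
    by (intro has_sum_Un_disjoint geo_tail_left geo_tail_right) (use assms in auto)
  moreover have "{..c} \<union> {c+1..} = UNIV" by auto
  moreover have "\<rho> ^ nat (c - c) / (1 - \<rho>) + \<rho> ^ nat (c + 1 - c) / (1 - \<rho>) = 2 / (1 - \<rho>) - 1"
    using assms by (simp add: field_simps)
  ultimately show ?thesis by simp
qed

lemma geo_fin_bound:
  fixes \<rho> :: real and c :: int
  assumes "0 \<le> \<rho>" "\<rho> < 1" "finite F"
  shows "(\<Sum>z\<in>F. \<rho> ^ nat \<bar>c - z\<bar>) \<le> 2 / (1 - \<rho>)"
proof -
  have "(\<Sum>z\<in>F. \<rho> ^ nat \<bar>c - z\<bar>) \<le> 2 / (1 - \<rho>) - 1"
    by (rule finite_sum_le_has_sum[OF geo_whole]) (use assms in auto)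
  then show ?thesis by simp
qed

lemma geo_inj_bound:
  fixes \<rho> :: real
  assumes "0 \<le> \<rho>" "\<rho> < 1" "finite F" "inj_on f F"
  shows "(\<Sum>x\<in>F. \<rho> ^ f x) \<le> 1 / (1 - \<rho>)"
proof -
  have "(\<Sum>x\<in>F. \<rho> ^ f x) = (\<Sum>w\<in>f ` F. \<rho> ^ w)" using assms by (simp add: sum.reindex)
  also have "\<dots> \<le> 1 / (1 - \<rho>)"
    by (rule finite_sum_le_has_sum[OF geo_has_sum]) (use assms in auto)
  finally show ?thesis .
qed



lemma three_var:
  fixes a b d :: complex
  assumes "a \<noteq> d" "a \<noteq> b" "b \<noteq> d" "a*d \<noteq> 1" "a*b \<noteq> 1" "b*d \<noteq> 1"
  shows "al a d * al b a + al d a * al b d = al b a * al b d"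
proof -
  define p1 where "p1 = a - d"
  define p2 where "p2 = b - a"
  define p3 where "p3 = b - d"
  define q1 where "q1 = 1 - a*d"
  define q2 where "q2 = 1 - b*a"
  define q3 where "q3 = 1 - b*d"
  define A where "A = 1 - a^2"
  define D where "D = 1 - d^2"
  have e: "a - d = p1" "d - a = - p1" "b - a = p2" "b - d = p3" "1 - a*d = q1" "1 - d*a = q1" "1 - b*a = q2" "1 - b*d = q3"
    "1 - a^2 = A" "1 - d^2 = D"
    by (simp_all add: p1_def p2_def p3_def q1_def q2_def q3_def A_def D_def mult.commute)
  have nz: "p1 \<noteq> 0" "p2 \<noteq> 0" "p3 \<noteq> 0" "q1 \<noteq> 0" "q2 \<noteq> 0" "q3 \<noteq> 0"
    using assms by (auto simp: p1_def p2_def p3_def q1_def q2_def q3_def mult.commute)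
  have E: "a * p3 * q3 - d * p2 * q2 = b * p1 * q1"
    unfolding p1_def p2_def p3_def q1_def q2_def q3_def by (simp add: algebra_simps)
  have s1: "a * D / (p1 * q1) * (b * A / (p2 * q2)) + d * A / ((-p1) * q1) * (b * D / (p3 * q3))
      = (b * A * D / (p1 * q1)) * (a / (p2 * q2) - d / (p3 * q3))"
    using nz by (simp add: field_simps)
  have s2: "a / (p2 * q2) - d / (p3 * q3) = (a * p3 * q3 - d * p2 * q2) / (p2 * q2 * p3 * q3)"
    using nz by (simp add: field_simps)
  have s3: "(b * A * D / (p1 * q1)) * ((b * p1 * q1) / (p2 * q2 * p3 * q3)) = b * A / (p2 * q2) * (b * D / (p3 * q3))"
    using nz by (simp add: field_simps)
  have "a * D / (p1 * q1) * (b * A / (p2 * q2)) + d * A / ((-p1) * q1) * (b * D / (p3 * q3))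
      = b * A / (p2 * q2) * (b * D / (p3 * q3))"
    using s1 s2 s3 E by simp
  then show ?thesis unfolding al_def e .
qed

fun cf :: "(nat \<Rightarrow> complex) \<Rightarrow> nat \<Rightarrow> nat \<Rightarrow> complex" where
  "cf lam 0 j = 1"
| "cf lam (Suc r) j = (if r = 0 then 1 else if j < r then cf lam r j * al (lam j) (lam r)
      else (\<Sum>i<r. cf lam r i * al (lam r) (lam i)))"

definition ww :: "complex \<Rightarrow> complex \<Rightarrow> complex" where
  "ww x y = (1 - y^2) / ((x - y) * (1 - x * y))"

definition cl :: "(nat \<Rightarrow> complex) \<Rightarrow> nat \<Rightarrow> nat \<Rightarrow> complex" where
  "cl lam r j = lam j ^ (r - 1) * (\<Prod>l\<in>{..<r} - {j}. ww (lam j) (lam l))"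

lemma al_ww: "al x y = x * ww x y" by (simp add: al_def ww_def)

lemma prod_norm_lt1: "norm (x::complex) < 1 \<Longrightarrow> norm y < 1 \<Longrightarrow> x * y \<noteq> 1"
proof
  assume "norm x < 1" "norm y < 1" "x * y = 1"
  then have "norm x * norm y < 1" using mult_strict_mono'[of "norm x" 1 "norm y" 1] by simp
  then show False using \<open>x * y = 1\<close> by (metis norm_mult norm_one less_irrefl)
qed

lemma cl_step:
  assumes "j < r"
  shows "cl lam (Suc r) j = cl lam r j * al (lam j) (lam r)"
proof -
  have "{..<Suc r} - {j} = insert r ({..<r} - {j})" using assms by auto
  then have "(\<Prod>l\<in>{..<Suc r} - {j}. ww (lam j) (lam l)) = ww (lam j) (lam r) * (\<Prod>l\<in>{..<r} - {j}. ww (lam j) (lam l))"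
    by simp
  moreover have "lam j ^ (Suc r - 1) = lam j ^ (r - 1) * lam j" using assms
    by (cases r) (auto simp: mult.commute)
  ultimately show ?thesis by (simp add: cl_def al_ww mult_ac)
qed

lemma cl_last: "cl lam (Suc r) r = lam r ^ r * (\<Prod>l<r. ww (lam r) (lam l))"
proof -
  have "{..<Suc r} - {r} = {..<r}" by auto
  then show ?thesis by (simp add: cl_def)
qed

lemma key_identity:
  assumes inj: "inj_on lam {..<N}" and nrm: "\<And>l. l < N \<Longrightarrow> norm (lam l) < 1"
  assumes "1 \<le> r"
  shows "\<And>q. r \<le> q \<Longrightarrow> q < N \<Longrightarrow>
     (\<Sum>i<r. cl lam r i * al (lam q) (lam i)) = lam q ^ r * (\<Prod>l<r. ww (lam q) (lam l))"
  using assms(3)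
proof (induction r rule: nat_induct_at_least)
  case base
  show ?case by (simp add: cl_def al_ww lessThan_Suc)
next
  case (Suc r)
  let ?d = "lam r"
  let ?b = "lam q"
  have rN: "r < N" using Suc by simp
  have IHd: "(\<Sum>i<r. cl lam r i * al ?d (lam i)) = ?d ^ r * (\<Prod>l<r. ww ?d (lam l))"
    using Suc.IH[of r] rN by simp
  have IHb: "(\<Sum>i<r. cl lam r i * al ?b (lam i)) = ?b ^ r * (\<Prod>l<r. ww ?b (lam l))"
    using Suc.IH[of q] Suc.prems by simp
  have tv: "al (lam i) ?d * al ?b (lam i) + al ?d (lam i) * al ?b ?d = al ?b (lam i) * al ?b ?d" if "i < r" for i
  proof (rule three_var)
    have iN: "i < N" "q < N" using that Suc by auto
    show "lam i \<noteq> lam r" "lam i \<noteq> lam q" "lam q \<noteq> lam r"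
      using inj iN rN that Suc.prems by (auto dest: inj_onD)
    show "lam i * lam r \<noteq> 1" "lam i * lam q \<noteq> 1" "lam q * lam r \<noteq> 1"
      using prod_norm_lt1[OF nrm nrm] iN rN by auto
  qed
  have "(\<Sum>i<Suc r. cl lam (Suc r) i * al ?b (lam i))
      = (\<Sum>i<r. cl lam r i * al (lam i) ?d * al ?b (lam i)) + cl lam (Suc r) r * al ?b ?d"
    by (simp add: cl_step)
  also have "cl lam (Suc r) r = (\<Sum>i<r. cl lam r i * al ?d (lam i))"
    using IHd cl_last by simp
  also have "(\<Sum>i<r. cl lam r i * al (lam i) ?d * al ?b (lam i)) + (\<Sum>i<r. cl lam r i * al ?d (lam i)) * al ?b ?d
     = (\<Sum>i<r. cl lam r i * (al (lam i) ?d * al ?b (lam i) + al ?d (lam i) * al ?b ?d))"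
    by (simp add: sum_distrib_right sum_distrib_left sum.distrib algebra_simps)
  also have "\<dots> = (\<Sum>i<r. cl lam r i * al ?b (lam i) * al ?b ?d)"
    by (intro sum.cong refl) (simp add: tv mult.assoc)
  also have "\<dots> = (\<Sum>i<r. cl lam r i * al ?b (lam i)) * al ?b ?d"
    by (simp add: sum_distrib_right)
  also have "\<dots> = ?b ^ Suc r * (\<Prod>l<Suc r. ww ?b (lam l))"
    unfolding IHb by (simp add: al_ww mult_ac)
  finally show ?case .
qed

lemma cf_cl:
  assumes inj: "inj_on lam {..<N}" and nrm: "\<And>l. l < N \<Longrightarrow> norm (lam l) < 1"
  assumes "1 \<le> r" "r \<le> N"
  shows "\<And>j. j < r \<Longrightarrow> cf lam r j = cl lam r j"
  using assms(3,4)
proof (induction r rule: nat_induct_at_least)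
  case base
  then show ?case by (simp add: cl_def lessThan_Suc)
next
  case (Suc r j)
  have r0: "r \<noteq> 0" using Suc by simp
  show ?case
  proof (cases "j < r")
    case True
    then show ?thesis using Suc r0 by (simp add: cl_step)
  next
    case False
    then have jr: "j = r" using Suc by simp
    have "cf lam (Suc r) j = (\<Sum>i<r. cl lam r i * al (lam r) (lam i))"
      using Suc r0 jr by simp
    also have "\<dots> = cl lam (Suc r) r"
      using key_identity[OF inj nrm, of r r] Suc cl_last by simp
    finally show ?thesis using jr by simp
  qed
qed



definition hk :: "(nat \<Rightarrow> complex) \<Rightarrow> (nat \<Rightarrow> int) \<Rightarrow> nat \<Rightarrow> int \<Rightarrow> complex" where
  "hk lam s l t = gg (lam l) (t - s l)"

definition sig :: "(nat \<Rightarrow> int) \<Rightarrow> nat \<Rightarrow> int" where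
  "sig s r = (\<Sum>l<r. s l)"

definition Gf :: "(nat \<Rightarrow> complex) \<Rightarrow> (nat \<Rightarrow> int) \<Rightarrow> nat \<Rightarrow> int \<Rightarrow> complex" where
  "Gf lam s r m = (\<Sum>j<r. cf lam r j * gg (lam j) (m - sig s r))"

lemma Gf_step:
  assumes inj: "inj_on lam {..<N}" and nrm: "\<And>l. l < N \<Longrightarrow> norm (lam l) < 1"
  assumes r1: "1 \<le> r" and rN: "r < N"
  shows "((\<lambda>t. Gf lam s r (m - t) * hk lam s r t) has_sum Gf lam s (Suc r) m) UNIV"
proof -
  let ?u = "m - sig s r"
  let ?M = "m - sig s (Suc r)"
  have M: "?u - s r = ?M" by (simp add: sig_def)
  have each: "((\<lambda>t. cf lam r j * (gg (lam j) (?u - t) * gg (lam r) (t - s r))) has_sum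
      (cf lam r j * (al (lam j) (lam r) * gg (lam j) ?M + al (lam r) (lam j) * gg (lam r) ?M))) UNIV"
    if "j < r" for j
  proof -
    have "lam j \<noteq> lam r" using inj that rN by (auto dest: inj_onD)
    moreover have "norm (lam j) < 1" "norm (lam r) < 1" using nrm that rN by auto
    ultimately show ?thesis using conv_shift[of "lam j" "lam r" ?u "s r"] M
      by (intro has_sum_cmult_right) simp
  qed
  have "((\<lambda>t. \<Sum>j<r. cf lam r j * (gg (lam j) (?u - t) * gg (lam r) (t - s r))) has_sum
      (\<Sum>j<r. cf lam r j * (al (lam j) (lam r) * gg (lam j) ?M + al (lam r) (lam j) * gg (lam r) ?M))) UNIV"
    by (intro has_sum_sum_fin each) auto
  moreover have "(\<lambda>t. \<Sum>j<r. cf lam r j * (gg (lam j) (?u - t) * gg (lam r) (t - s r)))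
      = (\<lambda>t. Gf lam s r (m - t) * hk lam s r t)"
    by (rule ext) (simp add: Gf_def hk_def sum_distrib_left sum_distrib_right mult_ac algebra_simps)
  moreover have "(\<Sum>j<r. cf lam r j * (al (lam j) (lam r) * gg (lam j) ?M + al (lam r) (lam j) * gg (lam r) ?M))
      = Gf lam s (Suc r) m"
  proof -
    have "(\<Sum>j<r. cf lam r j * (al (lam j) (lam r) * gg (lam j) ?M + al (lam r) (lam j) * gg (lam r) ?M))
       = (\<Sum>j<r. cf lam r j * al (lam j) (lam r) * gg (lam j) ?M) + (\<Sum>j<r. cf lam r j * al (lam r) (lam j)) * gg (lam r) ?M"
      by (simp add: sum.distrib sum_distrib_right sum_distrib_left algebra_simps)
    also have "\<dots> = Gf lam s (Suc r) m"
      using r1 by (simp add: Gf_def)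
    finally show ?thesis .
  qed
  ultimately show ?thesis by simp
qed

fun W :: "(nat \<Rightarrow> complex) \<Rightarrow> (nat \<Rightarrow> int) \<Rightarrow> nat \<Rightarrow> nat \<Rightarrow> nat \<Rightarrow> nat \<Rightarrow> complex" where
  "W lam s n 0 x y = (if x = y then 1 else 0)"
| "W lam s n (Suc r) x y = (\<Sum>z\<in>{1..n}. W lam s n r x z * hk lam s r (int z - int y))"

definition Dc :: "(nat \<Rightarrow> complex) \<Rightarrow> (nat \<Rightarrow> int) \<Rightarrow> real \<Rightarrow> nat \<Rightarrow> real" where
  "Dc lam s \<rho> r = (\<Sum>j<r. norm (cf lam r j)) / \<rho> ^ nat \<bar>sig s r\<bar>"

fun Bc :: "(nat \<Rightarrow> complex) \<Rightarrow> (nat \<Rightarrow> int) \<Rightarrow> real \<Rightarrow> nat \<Rightarrow> real" where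
  "Bc lam s \<rho> 0 = 0"
| "Bc lam s \<rho> (Suc r) = Bc lam s \<rho> r * (2 / (1 - \<rho>)) + Dc lam s \<rho> r / (1 - \<rho>)"

lemma gg_le: "norm a \<le> \<rho> \<Longrightarrow> norm (gg a t) \<le> \<rho> ^ nat \<bar>t\<bar>"
  unfolding gg_def norm_power by (intro power_mono) auto

lemma Dc_nonneg: "0 < \<rho> \<Longrightarrow> 0 \<le> Dc lam s \<rho> r"
  unfolding Dc_def by (intro divide_nonneg_pos sum_nonneg) auto

lemma Bc_nonneg: "0 < \<rho> \<Longrightarrow> \<rho> < 1 \<Longrightarrow> 0 \<le> Bc lam s \<rho> r"
  by (induction r) (auto intro!: add_nonneg_nonneg mult_nonneg_nonneg divide_nonneg_pos Dc_nonneg)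

lemma Gf_bound:
  assumes rho: "0 < \<rho>" "\<rho> < 1" and nr: "\<And>l. l < N \<Longrightarrow> norm (lam l) \<le> \<rho>" and rN: "r \<le> N"
  shows "norm (Gf lam s r m) \<le> Dc lam s \<rho> r * \<rho> ^ nat \<bar>m\<bar>"
proof -
  let ?\<sigma> = "sig s r"
  have pw: "\<rho> ^ nat \<bar>m - ?\<sigma>\<bar> \<le> \<rho> ^ nat \<bar>m\<bar> / \<rho> ^ nat \<bar>?\<sigma>\<bar>"
  proof -
    have "nat \<bar>m\<bar> \<le> nat \<bar>m - ?\<sigma>\<bar> + nat \<bar>?\<sigma>\<bar>" by arith
    then have "\<rho> ^ (nat \<bar>m - ?\<sigma>\<bar> + nat \<bar>?\<sigma>\<bar>) \<le> \<rho> ^ nat \<bar>m\<bar>"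
      using rho by (intro power_decreasing) auto
    then show ?thesis using rho by (simp add: power_add field_simps)
  qed
  have "norm (Gf lam s r m) \<le> (\<Sum>j<r. norm (cf lam r j) * \<rho> ^ nat \<bar>m - ?\<sigma>\<bar>)"
    unfolding Gf_def
  proof (rule order_trans[OF norm_sum sum_mono])
    fix j assume "j \<in> {..<r}"
    then have "norm (gg (lam j) (m - ?\<sigma>)) \<le> \<rho> ^ nat \<bar>m - ?\<sigma>\<bar>" using nr rN by (intro gg_le) auto
    then show "norm (cf lam r j * gg (lam j) (m - ?\<sigma>)) \<le> norm (cf lam r j) * \<rho> ^ nat \<bar>m - ?\<sigma>\<bar>"
      by (simp add: norm_mult mult_left_mono)
  qed
  also have "\<dots> \<le> (\<Sum>j<r. norm (cf lam r j) * (\<rho> ^ nat \<bar>m\<bar> / \<rho> ^ nat \<bar>?\<sigma>\<bar>))"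
    by (intro sum_mono mult_left_mono pw) auto
  also have "\<dots> = Dc lam s \<rho> r * \<rho> ^ nat \<bar>m\<bar>"
    by (simp add: Dc_def sum_distrib_right sum_divide_distrib)
  finally show ?thesis .
qed

lemma W_err:
  assumes inj: "inj_on lam {..<N}" and rho: "0 < \<rho>" "\<rho> < 1"
    and nr: "\<And>l. l < N \<Longrightarrow> norm (lam l) \<le> \<rho>"
    and r1: "1 \<le> r" and rN: "r \<le> N" and x: "x \<in> {1..n}"
  shows "norm (W lam s n r x y - Gf lam s r (int x - int y)) \<le> Bc lam s \<rho> r * (\<rho> ^ x + \<rho> ^ (n + 1 - x))"
  using r1 rN
proof (induction r arbitrary: y rule: nat_induct_at_least)
  case base
  have "W lam s n 1 x y = (\<Sum>z\<in>{1..n}. if z = x then hk lam s 0 (int z - int y) else 0)"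
    unfolding One_nat_def W.simps by (rule sum.cong) auto
  also have "\<dots> = hk lam s 0 (int x - int y)"
    using x by (simp only: sum.delta finite_atLeastAtMost) simp
  finally have W1: "W lam s n 1 x y = hk lam s 0 (int x - int y)" .
  have "Gf lam s 1 (int x - int y) = hk lam s 0 (int x - int y)"
    by (simp add: Gf_def hk_def sig_def)
  then show ?case using W1 by (simp add: Dc_def)
next
  case (Suc r)
  have nrm: "\<And>l. l < N \<Longrightarrow> norm (lam l) < 1" using nr rho by (meson le_less_trans)
  define X where "X = int x"
  define Y where "Y = int y"
  define e where "e = \<rho> ^ x + \<rho> ^ (n + 1 - x)"
  have e0: "0 \<le> e" using rho by (simp add: e_def)
  define f where "f = (\<lambda>z. Gf lam s r (X - z) * hk lam s r (z - Y))"
  define G' where "G' = Gf lam s (Suc r) (X - Y)"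
  define J where "J = {1..int n}"
  have fsum: "(f has_sum G') UNIV"
  proof -
    have h: "((\<lambda>t. Gf lam s r (X - Y - t) * hk lam s r t) has_sum G') UNIV"
      unfolding G'_def by (rule Gf_step[OF inj nrm]) (use Suc in auto)
    have "((\<lambda>t. Gf lam s r (X - Y - t) * hk lam s r t) has_sum G') UNIV = (f has_sum G') UNIV"
      by (rule has_sum_reindex_bij_witness[where i = "\<lambda>z. z - Y" and j = "\<lambda>t. t + Y"])
        (auto simp: f_def algebra_simps)
    then show ?thesis using h by simp
  qed
  have tail: "(f has_sum (G' - sum f J)) (UNIV - J)"
    by (rule has_sum_Diff[OF fsum has_sum_finite]) (auto simp: J_def)
  have UJ: "UNIV - J = {..0} \<union> {int n + 1..}" by (auto simp: J_def)
  have gsum: "((\<lambda>z. Dc lam s \<rho> r * \<rho> ^ nat \<bar>X - z\<bar>) has_sum (Dc lam s \<rho> r * (e / (1 - \<rho>)))) (UNIV - J)"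
  proof -
    have "((\<lambda>z. \<rho> ^ nat \<bar>X - z\<bar>) has_sum (\<rho> ^ nat (X - 0) / (1 - \<rho>) + \<rho> ^ nat (int n + 1 - X) / (1 - \<rho>)))
        ({..0} \<union> {int n + 1..})"
      by (intro has_sum_Un_disjoint geo_tail_left geo_tail_right) (use rho x in \<open>auto simp: X_def\<close>)
    moreover have "\<rho> ^ nat (X - 0) / (1 - \<rho>) + \<rho> ^ nat (int n + 1 - X) / (1 - \<rho>) = e / (1 - \<rho>)"
    proof -
      have "nat (int n + 1 - X) = n + 1 - x" using x by (simp add: X_def)
      then show ?thesis by (simp add: X_def e_def add_divide_distrib)
    qed
    ultimately have "((\<lambda>z. \<rho> ^ nat \<bar>X - z\<bar>) has_sum (e / (1 - \<rho>))) (UNIV - J)" using UJ by simp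
    then show ?thesis by (rule has_sum_cmult_right)
  qed
  have hk1: "norm (hk lam s r t) \<le> 1" for t
  proof -
    have "norm (hk lam s r t) \<le> \<rho> ^ nat \<bar>t - s r\<bar>" unfolding hk_def using nr Suc by (intro gg_le) auto
    also have "\<dots> \<le> 1" using rho by (simp add: power_le_one)
    finally show ?thesis .
  qed
  have tailb: "norm (G' - sum f J) \<le> Dc lam s \<rho> r * (e / (1 - \<rho>))"
  proof (rule norm_infsum_le[OF tail gsum])
    fix z
    have "norm (f z) \<le> norm (Gf lam s r (X - z)) * 1"
      unfolding f_def norm_mult by (intro mult_left_mono hk1) auto
    also have "\<dots> \<le> Dc lam s \<rho> r * \<rho> ^ nat \<bar>X - z\<bar>"
      using Gf_bound[OF rho nr, where r=r and s=s and m="X - z"] Suc by simp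
    finally show "norm (f z) \<le> Dc lam s \<rho> r * \<rho> ^ nat \<bar>X - z\<bar>" .
  qed
  have sumJ: "sum f J = (\<Sum>z\<in>{1..n}. Gf lam s r (X - int z) * hk lam s r (int z - Y))"
  proof -
    have "J = int ` {1..n}" by (simp add: J_def image_int_atLeastAtMost)
    then show ?thesis by (simp add: sum.reindex f_def)
  qed
  have hsum: "(\<Sum>z\<in>{1..n}. norm (hk lam s r (int z - Y))) \<le> 2 / (1 - \<rho>)"
  proof -
    have "(\<Sum>z\<in>{1..n}. norm (hk lam s r (int z - Y))) \<le> (\<Sum>z\<in>{1..n}. \<rho> ^ nat \<bar>(Y + s r) - int z\<bar>)"
    proof (rule sum_mono)
      fix z assume "z \<in> {1..n}"
      have "norm (hk lam s r (int z - Y)) \<le> \<rho> ^ nat \<bar>int z - Y - s r\<bar>"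
        unfolding hk_def using nr Suc by (intro gg_le) auto
      also have "\<bar>int z - Y - s r\<bar> = \<bar>(Y + s r) - int z\<bar>" by arith
      finally show "norm (hk lam s r (int z - Y)) \<le> \<rho> ^ nat \<bar>(Y + s r) - int z\<bar>" .
    qed
    also have "\<dots> = (\<Sum>w\<in>int ` {1..n}. \<rho> ^ nat \<bar>(Y + s r) - w\<bar>)"
      by (simp add: sum.reindex)
    also have "\<dots> \<le> 2 / (1 - \<rho>)"
      by (rule geo_fin_bound) (use rho in auto)
    finally show ?thesis .
  qed
  have decomp: "W lam s n (Suc r) x y - G'
      = (\<Sum>z\<in>{1..n}. (W lam s n r x z - Gf lam s r (X - int z)) * hk lam s r (int z - Y)) + (sum f J - G')"
    by (simp add: sumJ Y_def algebra_simps sum_subtractf)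
  have "norm (\<Sum>z\<in>{1..n}. (W lam s n r x z - Gf lam s r (X - int z)) * hk lam s r (int z - Y))
      \<le> (\<Sum>z\<in>{1..n}. Bc lam s \<rho> r * e * norm (hk lam s r (int z - Y)))"
  proof (rule order_trans[OF norm_sum sum_mono])
    fix z assume "z \<in> {1..n}"
    have "norm (W lam s n r x z - Gf lam s r (X - int z)) \<le> Bc lam s \<rho> r * e"
      using Suc.IH[of z] Suc.prems by (simp add: X_def e_def)
    then show "norm ((W lam s n r x z - Gf lam s r (X - int z)) * hk lam s r (int z - Y))
        \<le> Bc lam s \<rho> r * e * norm (hk lam s r (int z - Y))"
      unfolding norm_mult by (intro mult_right_mono) auto
  qed
  also have "\<dots> = Bc lam s \<rho> r * e * (\<Sum>z\<in>{1..n}. norm (hk lam s r (int z - Y)))"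
    by (simp add: sum_distrib_left)
  also have "\<dots> \<le> Bc lam s \<rho> r * e * (2 / (1 - \<rho>))"
    by (intro mult_left_mono hsum mult_nonneg_nonneg Bc_nonneg e0) (use rho in auto)
  finally have first: "norm (\<Sum>z\<in>{1..n}. (W lam s n r x z - Gf lam s r (X - int z)) * hk lam s r (int z - Y))
      \<le> Bc lam s \<rho> r * e * (2 / (1 - \<rho>))" .
  have "norm (W lam s n (Suc r) x y - G') \<le> Bc lam s \<rho> r * e * (2 / (1 - \<rho>)) + Dc lam s \<rho> r * (e / (1 - \<rho>))"
    unfolding decomp using first tailb norm_minus_commute[of "sum f J" G']
    by (smt (verit) norm_triangle_ineq)
  also have "\<dots> = Bc lam s \<rho> (Suc r) * e" by (simp add: algebra_simps)
  finally show ?case by (simp add: G'_def X_def Y_def e_def)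
qed



lemma sum_PiE_insert:
  assumes "finite A" "r \<notin> A" "\<And>i. finite (B i)"
  shows "(\<Sum>i\<in>PiE (insert r A) B. F i) = (\<Sum>z\<in>B r. \<Sum>g\<in>PiE A B. F (g(r := z)))"
proof -
  have "(\<Sum>i\<in>PiE (insert r A) B. F i) = (\<Sum>i\<in>(\<lambda>(y, g). g(r := y)) ` (B r \<times> PiE A B). F i)"
    by (simp add: PiE_insert_eq)
  also have "\<dots> = (\<Sum>(z, g)\<in>B r \<times> PiE A B. F (g(r := z)))"
    by (subst sum.reindex[OF inj_combinator[OF assms(2)]]) (simp_all add: o_def case_prod_unfold)
  also have "\<dots> = (\<Sum>z\<in>B r. \<Sum>g\<in>PiE A B. F (g(r := z)))"
    by (simp add: sum.cartesian_product)
  finally show ?thesis .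
qed

definition Ch :: "(nat \<Rightarrow> complex) \<Rightarrow> (nat \<Rightarrow> int) \<Rightarrow> nat \<Rightarrow> (nat \<Rightarrow> nat) \<Rightarrow> nat \<Rightarrow> complex" where
  "Ch lam s r i y = (\<Prod>l<r. hk lam s l (int (i l) - int (if Suc l < r then i (Suc l) else y)))"

lemma Ch_step:
  "Ch lam s (Suc r) (g(r := z)) y = Ch lam s r g z * hk lam s r (int z - int y)"
proof -
  have "(\<Prod>l<r. hk lam s l (int ((g(r := z)) l) - int (if Suc l < Suc r then (g(r := z)) (Suc l) else y)))
      = (\<Prod>l<r. hk lam s l (int (g l) - int (if Suc l < r then g (Suc l) else z)))"
    by (intro prod.cong refl) auto
  then show ?thesis by (simp add: Ch_def)
qed

lemma chain_sum:
  assumes "1 \<le> r"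
  shows "(\<Sum>i\<in>PiE {..<r} (\<lambda>_. {1..n}). if i 0 = x then Ch lam s r i y else 0) = W lam s n r x y"
  using assms
proof (induction r arbitrary: y rule: nat_induct_at_least)
  case base
  have "(\<Sum>i\<in>PiE {..<1} (\<lambda>_. {1..n}). if i 0 = x then Ch lam s 1 i y else 0)
      = (\<Sum>z\<in>{1..n}. \<Sum>g\<in>PiE {} (\<lambda>_. {1..n}). if (g(0 := z)) 0 = x then Ch lam s 1 (g(0 := z)) y else 0)"
    using sum_PiE_insert[of "{}" 0 "\<lambda>_. {1..n}" "\<lambda>i. if i 0 = x then Ch lam s 1 i y else 0"]
    by (simp add: lessThan_Suc)
  also have "\<dots> = (\<Sum>z\<in>{1..n}. (if x = z then 1 else 0) * hk lam s 0 (int z - int y))"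
    by (intro sum.cong refl) (auto simp: Ch_def)
  finally show ?case by simp
next
  case (Suc r)
  have "(\<Sum>i\<in>PiE {..<Suc r} (\<lambda>_. {1..n}). if i 0 = x then Ch lam s (Suc r) i y else 0)
      = (\<Sum>z\<in>{1..n}. \<Sum>g\<in>PiE {..<r} (\<lambda>_. {1..n}).
           if (g(r := z)) 0 = x then Ch lam s (Suc r) (g(r := z)) y else 0)"
    using sum_PiE_insert[of "{..<r}" r "\<lambda>_. {1..n}" "\<lambda>i. if i 0 = x then Ch lam s (Suc r) i y else 0"]
    by (simp add: lessThan_Suc)
  also have "\<dots> = (\<Sum>z\<in>{1..n}. (\<Sum>g\<in>PiE {..<r} (\<lambda>_. {1..n}). if g 0 = x then Ch lam s r g z else 0)
        * hk lam s r (int z - int y))"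
  proof (intro sum.cong refl)
    fix z
    have r0: "r \<noteq> 0" using Suc by simp
    show "(\<Sum>g\<in>PiE {..<r} (\<lambda>_. {1..n}). if (g(r := z)) 0 = x then Ch lam s (Suc r) (g(r := z)) y else 0)
        = (\<Sum>g\<in>PiE {..<r} (\<lambda>_. {1..n}). if g 0 = x then Ch lam s r g z else 0) * hk lam s r (int z - int y)"
      unfolding sum_distrib_right using r0 by (intro sum.cong refl) (simp add: Ch_step)
  qed
  also have "\<dots> = W lam s n (Suc r) x y"
    using Suc.IH by simp
  finally show ?case .
qed

lemma main_sum:
  assumes k: "1 \<le> k"
  shows "(\<Sum>i \<in> PiE {0..<k} (\<lambda>_. {1..n::nat}).
               \<Prod>l<k. lam l ^ nat \<bar>int (i l) - int (i ((l + 1) mod k)) - s l\<bar>)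
       = (\<Sum>x\<in>{1..n}. W lam s n k x x)"
proof -
  let ?P = "PiE {..<k} (\<lambda>_. {1..n::nat})"
  have fin: "finite ?P" by (simp add: finite_PiE)
  have eq: "(\<Prod>l<k. lam l ^ nat \<bar>int (i l) - int (i ((l + 1) mod k)) - s l\<bar>) = Ch lam s k i (i 0)" for i
    unfolding Ch_def hk_def gg_def
  proof (intro prod.cong refl)
    fix l assume l: "l \<in> {..<k}"
    have "(l + 1) mod k = (if Suc l < k then Suc l else 0)"
    proof (cases "Suc l < k")
      case False
      then have "Suc l = k" using l by simp
      then show ?thesis by simp
    qed simp
    then show "lam l ^ nat \<bar>int (i l) - int (i ((l + 1) mod k)) - s l\<bar>
        = lam l ^ nat \<bar>int (i l) - int (if Suc l < k then i (Suc l) else i 0) - s l\<bar>"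
      by simp
  qed
  have "(\<Sum>i \<in> PiE {0..<k} (\<lambda>_. {1..n::nat}). \<Prod>l<k. lam l ^ nat \<bar>int (i l) - int (i ((l + 1) mod k)) - s l\<bar>)
      = (\<Sum>i\<in>?P. Ch lam s k i (i 0))"
    unfolding atLeast0LessThan by (rule sum.cong[OF refl eq])
  also have "\<dots> = (\<Sum>i\<in>?P. \<Sum>x\<in>{1..n}. if i 0 = x then Ch lam s k i x else 0)"
  proof (intro sum.cong refl)
    fix i assume "i \<in> ?P"
    then have "i 0 \<in> {1..n}" using k by (auto simp: PiE_def Pi_def)
    then show "Ch lam s k i (i 0) = (\<Sum>x\<in>{1..n}. if i 0 = x then Ch lam s k i x else 0)"
      by (simp add: sum.delta)
  qed
  also have "\<dots> = (\<Sum>x\<in>{1..n}. \<Sum>i\<in>?P. if i 0 = x then Ch lam s k i x else 0)"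
    by (rule sum.swap)
  also have "\<dots> = (\<Sum>x\<in>{1..n}. W lam s n k x x)"
    using chain_sum[OF k] by simp
  finally show ?thesis .
qed



theorem mainTheorem1:
  fixes k :: nat and lam :: "nat \<Rightarrow> complex" and s :: "nat \<Rightarrow> int"
  assumes "k \<ge> 1"
    and "inj_on lam {0..<k}"
    and "\<And>l. l < k \<Longrightarrow> norm (lam l) < 1"
  defines "S \<equiv> nat \<bar>\<Sum>l<k. s l\<bar>"
  shows "(\<lambda>n. (1 / of_nat n) *
            (\<Sum>i \<in> PiE {0..<k} (\<lambda>_. {1..n::nat}).
               \<Prod>l<k. lam l ^ nat \<bar>int (i l) - int (i ((l + 1) mod k)) - s l\<bar>))
         \<longlonglongrightarrow>
         (\<Sum>j<k. lam j ^ (S + k - 1) *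
            (\<Prod>l \<in> {..<k} - {j}. (1 - lam l ^ 2) / ((lam j - lam l) * (1 - lam j * lam l))))"
proof -
  have k: "1 \<le> k" using assms(1) by simp
  have injk: "inj_on lam {..<k}" using assms(2) by (simp add: atLeast0LessThan)
  have nrm: "\<And>l. l < k \<Longrightarrow> norm (lam l) < 1" by (rule assms(3))
  define \<rho> where "\<rho> = max (1/2) (Max ((\<lambda>l. norm (lam l)) ` {..<k}))"
  have "0 \<in> {..<k}" using k by simp
  then have ne: "(\<lambda>l. norm (lam l)) ` {..<k} \<noteq> {}" by blast
  have rho0: "0 < \<rho>" by (simp add: \<rho>_def)
  have rho1: "\<rho> < 1"
    unfolding \<rho>_def using ne nrm by (auto simp: Max_less_iff)
  have nr: "\<And>l. l < k \<Longrightarrow> norm (lam l) \<le> \<rho>"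
    unfolding \<rho>_def by (rule max.coboundedI2) (auto intro: Max_ge)
  define L where "L = Gf lam s k 0"
  have Lval: "L = (\<Sum>j<k. lam j ^ (S + k - 1) *
            (\<Prod>l \<in> {..<k} - {j}. (1 - lam l ^ 2) / ((lam j - lam l) * (1 - lam j * lam l))))"
    unfolding L_def Gf_def
  proof (intro sum.cong refl)
    fix j assume j: "j \<in> {..<k}"
    have "cf lam k j = cl lam k j" using cf_cl[OF injk nrm k order.refl] j by simp
    moreover have "gg (lam j) (0 - sig s k) = lam j ^ S" by (simp add: gg_def sig_def S_def)
    moreover have "lam j ^ (k - 1) * lam j ^ S = lam j ^ (S + k - 1)"
    proof -
      have "k - 1 + S = S + k - 1" using k by simp
      then show ?thesis by (simp add: power_add[symmetric])
    qed
    ultimately show "cf lam k j * gg (lam j) (0 - sig s k) = lam j ^ (S + k - 1) *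
            (\<Prod>l \<in> {..<k} - {j}. (1 - lam l ^ 2) / ((lam j - lam l) * (1 - lam j * lam l)))"
      by (simp add: cl_def ww_def mult_ac)
  qed
  define C where "C = Bc lam s \<rho> k * (2 / (1 - \<rho>))"
  define M where "M = (\<lambda>n. (\<Sum>i \<in> PiE {0..<k} (\<lambda>_. {1..n::nat}).
               \<Prod>l<k. lam l ^ nat \<bar>int (i l) - int (i ((l + 1) mod k)) - s l\<bar>))"
  have bound: "norm ((1 / of_nat n) * M n - L) \<le> C / real n" if n: "n \<ge> 1" for n
  proof -
    have "M n = (\<Sum>x\<in>{1..n}. W lam s n k x x)" unfolding M_def by (rule main_sum[OF k])
    then have "(1 / of_nat n) * M n - L = (1 / of_nat n) * (\<Sum>x\<in>{1..n}. (W lam s n k x x - Gf lam s k (int x - int x)))"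
      using n by (simp add: sum_subtractf L_def field_simps)
    then have "norm ((1 / of_nat n) * M n - L) = (1 / real n) * norm (\<Sum>x\<in>{1..n}. (W lam s n k x x - Gf lam s k (int x - int x)))"
      by (simp add: norm_mult norm_divide)
    also have "\<dots> \<le> (1 / real n) * (\<Sum>x\<in>{1..n}. Bc lam s \<rho> k * (\<rho> ^ x + \<rho> ^ (n + 1 - x)))"
      by (intro mult_left_mono order_trans[OF norm_sum sum_mono] W_err[OF injk rho0 rho1 nr k order.refl]) auto
    also have "\<dots> = (1 / real n) * (Bc lam s \<rho> k * ((\<Sum>x\<in>{1..n}. \<rho> ^ x) + (\<Sum>x\<in>{1..n}. \<rho> ^ (n + 1 - x))))"
      by (simp only: sum_distrib_left[symmetric] sum.distrib)
    also have "\<dots> \<le> (1 / real n) * (Bc lam s \<rho> k * (1 / (1 - \<rho>) + 1 / (1 - \<rho>)))"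
    proof (intro mult_left_mono add_mono Bc_nonneg)
      show "(\<Sum>x\<in>{1..n}. \<rho> ^ x) \<le> 1 / (1 - \<rho>)"
        using geo_inj_bound[of \<rho> "{1..n}" id] rho0 rho1 by simp
      show "(\<Sum>x\<in>{1..n}. \<rho> ^ (n + 1 - x)) \<le> 1 / (1 - \<rho>)"
        by (rule geo_inj_bound) (use rho0 rho1 in \<open>auto simp: inj_on_def\<close>)
    qed (use rho0 rho1 in auto)
    also have "\<dots> = C / real n" by (simp add: C_def)
    finally show ?thesis .
  qed
  have "((\<lambda>n. (1 / of_nat n) * M n - L) \<longlongrightarrow> 0) sequentially"
  proof (rule Lim_null_comparison)
    show "\<forall>\<^sub>F n in sequentially. norm ((1 / of_nat n) * M n - L) \<le> C / real n"
      using eventually_ge_at_top[of "1::nat"] by (rule eventually_mono) (rule bound)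
    show "((\<lambda>n. C / real n) \<longlongrightarrow> 0) sequentially" by (rule lim_const_over_n)
  qed
  then have "((\<lambda>n. (1 / of_nat n) * M n) \<longlongrightarrow> L) sequentially"
    by (simp add: Lim_null[symmetric])
  then show ?thesis unfolding M_def Lval .
qed

end
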